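(* Let $a,b$ be positive integers with $a\equiv 0\pmod b$, let $n\geq 1$, and let $G$ be a regular graph. If $aG\circ nK_1$ is distance magic, then $bG\circ \frac{a}{b}(nK_1)$ is distance magic.
   Context: A graph $G$ on $v$ vertices is distance magic if there is a bijection $f:V(G)\to\{1,\ldots,v\}$ and a constant $k$ such that for every vertex $x$, $\sum_{y\in N(x)}f(y)=k$, where $N(x)$ is the set of neighbours of $x$. For a positive integer $c$, $cH$ denotes the disjoint union of $c$ copies of $H$; $nK_1$ is the edgeless graph on $n$ vertices (so $\frac{a}{b}(nK_1)$ is the edgeless graph on $\frac{an}{b}$ vertices). The lexicographic product $G\circ H$ has vertex set $V(G)\times V(H)$, with $(g,h)$ adjacent to $(g',h')$ iff either $gg'\in E(G)$, or $g=g'$ and $hh'\in E(H)$. *)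

theory Defs
  imports Main
begin

type_synonym 'a graph = "'a set \<times> ('a \<Rightarrow> 'a \<Rightarrow> bool)"

definition verts :: "'a graph \<Rightarrow> 'a set" where "verts G = fst G"
definition adj :: "'a graph \<Rightarrow> 'a \<Rightarrow> 'a \<Rightarrow> bool" where "adj G = snd G"

definition simple_graph :: "'a graph \<Rightarrow> bool" where
  "simple_graph G \<longleftrightarrow> finite (verts G)
     \<and> (\<forall>x y. adj G x y \<longrightarrow> x \<in> verts G \<and> y \<in> verts G)
     \<and> (\<forall>x y. adj G x y \<longrightarrow> adj G y x)
     \<and> (\<forall>x. \<not> adj G x x)"

definition nbhd :: "'a graph \<Rightarrow> 'a \<Rightarrow> 'a set" where
  "nbhd G x = {y \<in> verts G. adj G x y}"

definition regular :: "'a graph \<Rightarrow> bool" where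
  "regular G \<longleftrightarrow> (\<exists>r. \<forall>x \<in> verts G. card (nbhd G x) = r)"

definition distance_magic :: "'a graph \<Rightarrow> bool" where
  "distance_magic G \<longleftrightarrow> (\<exists>f :: 'a \<Rightarrow> nat. \<exists>k.
      bij_betw f (verts G) {1..card (verts G)} \<and>
      (\<forall>x \<in> verts G. (\<Sum>y \<in> nbhd G x. f y) = k))"

text \<open>cH: disjoint union of c copies of H, copy index in {0..<c}.\<close>
definition copies :: "nat \<Rightarrow> 'a graph \<Rightarrow> (nat \<times> 'a) graph" where
  "copies c H = ({0..<c} \<times> verts H,
                 \<lambda>(i, x) (j, y). i = j \<and> adj H x y)"

definition empty_graph :: "nat \<Rightarrow> nat graph" where
  "empty_graph n = ({0..<n}, \<lambda>_ _. False)"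

definition lex_prod :: "'a graph \<Rightarrow> 'b graph \<Rightarrow> ('a \<times> 'b) graph" where
  "lex_prod G H = (verts G \<times> verts H,
     \<lambda>(g, h) (g', h'). g \<in> verts G \<and> g' \<in> verts G \<and> h \<in> verts H \<and> h' \<in> verts H \<and>
        (adj G g g' \<or> (g = g' \<and> adj H h h')))"

end

theory Submission
  imports Defs
begin

lemma verts_lp: "verts (lex_prod (copies c G) (empty_graph m)) = ({0..<c} \<times> verts G) \<times> {0..<m}"
  by (simp add: lex_prod_def copies_def empty_graph_def verts_def)

lemma nbhd_lp:
  assumes sg: "simple_graph G" and i: "i < c" and x: "x \<in> verts G" and j: "j < m"
  shows "nbhd (lex_prod (copies c G) (empty_graph m)) ((i,x),j) = ({i} \<times> nbhd G x) \<times> {0..<m}"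
  using assms unfolding nbhd_def simple_graph_def
  by (auto simp: lex_prod_def copies_def empty_graph_def verts_def adj_def)

lemma sum_nbhd_lp:
  assumes sg: "simple_graph G" and i: "i < c" and x: "x \<in> verts G" and j: "j < m"
  shows "(\<Sum>v \<in> nbhd (lex_prod (copies c G) (empty_graph m)) ((i,x),j). F v)
       = (\<Sum>y \<in> nbhd G x. \<Sum>j'<m. F ((i,y),j'))"
proof -
  have fin: "finite (nbhd G x)" using sg unfolding simple_graph_def nbhd_def by auto
  have "(\<Sum>v \<in> ({i} \<times> nbhd G x) \<times> {0..<m}. F v) = (\<Sum>p \<in> {i} \<times> nbhd G x. \<Sum>j'\<in>{0..<m}. F (p,j'))"
    by (simp add: sum.cartesian_product split_beta')
  also have "\<dots> = (\<Sum>y \<in> nbhd G x. \<Sum>j'\<in>{0..<m}. F ((i,y),j'))"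
  proof -
    have "{i} \<times> nbhd G x = Pair i ` nbhd G x" by auto
    thus ?thesis by (simp add: sum.reindex inj_on_def)
  qed
  finally show ?thesis using nbhd_lp[OF assms] by (simp add: atLeast0LessThan)
qed

lemma sum_divmod:
  fixes F :: "nat \<Rightarrow> nat \<Rightarrow> nat"
  shows "(\<Sum>m<c*n. F (m div n) (m mod n)) = (\<Sum>t<c. \<Sum>j<n. F t j)"
proof (induction c)
  case 0 then show ?case by simp
next
  case (Suc c)
  have "{..<Suc c * n} = {..<c*n} \<union> {c*n..<c*n+n}" by auto
  hence "(\<Sum>m<Suc c*n. F (m div n) (m mod n)) = (\<Sum>m<c*n. F (m div n) (m mod n)) + (\<Sum>m\<in>{c*n..<c*n+n}. F (m div n) (m mod n))"
    by (simp add: sum.union_disjoint ivl_disj_int)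
  also have "(\<Sum>m\<in>{c*n..<c*n+n}. F (m div n) (m mod n)) = (\<Sum>j<n. F c j)"
  proof -
    have "(\<Sum>m\<in>{c*n..<c*n+n}. F (m div n) (m mod n)) = (\<Sum>j\<in>{0..<n}. F ((j + c*n) div n) ((j + c*n) mod n))"
      using sum.shift_bounds_nat_ivl[of "\<lambda>m. F (m div n) (m mod n)" 0 "c*n" n] by (simp add: add.commute)
    also have "\<dots> = (\<Sum>j\<in>{0..<n}. F c j)"
      by (rule sum.cong) auto
    finally show ?thesis by (simp add: atLeast0LessThan)
  qed
  finally show ?case using Suc by simp
qed

theorem theorem15:
  fixes G :: "'a graph" and a b n :: nat
  assumes "simple_graph G" and "regular G"
    and "a > 0" and "b > 0" and "b dvd a" and "n \<ge> 1"
    and "distance_magic (lex_prod (copies a G) (empty_graph n))"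
  shows "distance_magic (lex_prod (copies b G) (empty_graph ((a div b) * n)))"
proof -
  define c where "c = a div b"
  have a: "a = b * c" using assms(5) c_def by simp
  have cpos: "c > 0" using assms(3) a by (cases c) auto
  let ?H1 = "lex_prod (copies a G) (empty_graph n)"
  let ?H2 = "lex_prod (copies b G) (empty_graph (c * n))"
  obtain f k where fb: "bij_betw f (verts ?H1) {1..card (verts ?H1)}"
    and fk: "\<forall>v \<in> verts ?H1. (\<Sum>y \<in> nbhd ?H1 v. f y) = k"
    using assms(7) unfolding distance_magic_def by blast
  define \<phi> :: "(nat \<times> 'a) \<times> nat \<Rightarrow> (nat \<times> 'a) \<times> nat" where
    "\<phi> = (\<lambda>((i,x),m). ((i*c + m div n, x), m mod n))"
  define \<psi> :: "(nat \<times> 'a) \<times> nat \<Rightarrow> (nat \<times> 'a) \<times> nat" where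
    "\<psi> = (\<lambda>((i,x),j). ((i div c, x), (i mod c)*n + j))"
  have npos: "n > 0" using assms(6) by simp
  have lt: "i*c + t < a" if "i < b" "t < c" for i t
  proof -
    have "i*c + t < i*c + c" using that by simp
    also have "\<dots> = (i+1)*c" by simp
    also have "\<dots> \<le> b*c" using that by (intro mult_right_mono) auto
    finally show ?thesis using a by simp
  qed
  have bij: "bij_betw \<phi> (verts ?H2) (verts ?H1)"
  proof (rule bij_betw_byWitness[where f'=\<psi>])
    show "\<forall>v\<in>verts ?H2. \<psi> (\<phi> v) = v"
    proof
      fix v assume "v \<in> verts ?H2"
      then obtain i x m where v: "v = ((i,x),m)" and m: "m < c*n"
        by (auto simp: verts_lp)
      have q: "m div n < c" using m npos by (simp add: div_less_iff_less_mult)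
      have "(i*c + m div n) div c = i" using q cpos by simp
      moreover have "(i*c + m div n) mod c = m div n" using q by simp
      moreover have "m div n * n + m mod n = m" by simp
      ultimately show "\<psi> (\<phi> v) = v" using v by (simp add: \<phi>_def \<psi>_def)
    qed
    show "\<forall>v\<in>verts ?H1. \<phi> (\<psi> v) = v"
      using npos cpos by (auto simp: verts_lp \<phi>_def \<psi>_def)
    show "\<phi> ` verts ?H2 \<subseteq> verts ?H1"
      using npos cpos lt by (auto simp: verts_lp \<phi>_def less_mult_imp_div_less mult.commute)
    show "\<psi> ` verts ?H1 \<subseteq> verts ?H2"
    proof
      fix v assume "v \<in> \<psi> ` verts ?H1"
      then obtain i x j where v: "v = \<psi> ((i,x),j)" and i: "i < a" and x: "x \<in> verts G" and j: "j < n"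
        by (auto simp: verts_lp)
      have "i div c < b" using i a cpos by (simp add: less_mult_imp_div_less)
      moreover have "(i mod c)*n + j < c*n"
      proof -
        have "i mod c + 1 \<le> c" using cpos by (simp add: Suc_leI)
        hence "(i mod c + 1)*n \<le> c*n" by (rule mult_right_mono) simp
        thus ?thesis using j by simp
      qed
      ultimately show "v \<in> verts ?H2" using v x by (auto simp: verts_lp \<psi>_def)
    qed
  qed
  have card_eq: "card (verts ?H2) = card (verts ?H1)" using bij by (rule bij_betw_same_card)
  have gb: "bij_betw (f \<circ> \<phi>) (verts ?H2) {1..card (verts ?H2)}"
    using bij_betw_trans[OF bij fb] card_eq by simp
  have gk: "\<forall>v \<in> verts ?H2. (\<Sum>y \<in> nbhd ?H2 v. (f \<circ> \<phi>) y) = c * k"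
  proof
    fix v assume "v \<in> verts ?H2"
    then obtain i x m where v: "v = ((i,x),m)" and i: "i < b" and x: "x \<in> verts G" and m: "m < c*n"
      by (auto simp: verts_lp)
    have "(\<Sum>y \<in> nbhd ?H2 v. (f \<circ> \<phi>) y) = (\<Sum>y \<in> nbhd G x. \<Sum>m'<c*n. f ((i*c + m' div n, y), m' mod n))"
      using sum_nbhd_lp[OF assms(1) i x m, of "f \<circ> \<phi>"] v by (simp add: \<phi>_def)
    also have "\<dots> = (\<Sum>y \<in> nbhd G x. \<Sum>t<c. \<Sum>j<n. f ((i*c + t, y), j))"
      by (rule sum.cong[OF refl], rule sum_divmod[where F="\<lambda>t j. f ((i*c + t, _), j)"])
    also have "\<dots> = (\<Sum>t<c. \<Sum>y \<in> nbhd G x. \<Sum>j<n. f ((i*c + t, y), j))"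
      by (rule sum.swap)
    also have "\<dots> = (\<Sum>t<c. k)"
    proof (rule sum.cong[OF refl])
      fix t assume "t \<in> {..<c}"
      hence t: "i*c+t < a" using lt i by simp
      have "((i*c+t,x),0) \<in> verts ?H1" using t x npos by (simp add: verts_lp)
      hence "(\<Sum>y \<in> nbhd ?H1 ((i*c+t,x),0). f y) = k" using fk by blast
      thus "(\<Sum>y \<in> nbhd G x. \<Sum>j<n. f ((i*c + t, y), j)) = k"
        using sum_nbhd_lp[OF assms(1) t x npos, of f] by simp
    qed
    finally show "(\<Sum>y \<in> nbhd ?H2 v. (f \<circ> \<phi>) y) = c * k" by simp
  qed
  show ?thesis unfolding distance_magic_def c_def[symmetric]
    using gb gk by blast
qed

end
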